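(* In the setting of the addition algorithm, the maps $T^+:\mathbb{R}^V\to\mathbb{R}^V$ and $T^-:\mathbb{R}^V\to\mathbb{R}^V$ are one-to-one and onto. Moreover $T^-(\varphi)=-T^+(-\varphi)$ for all $\varphi\in\mathbb{R}^V$.
   Context: Addition algorithm. Let $G=(V,E)$ be a finite connected graph ($v\sim w$ means $(v,w)\in E$), $\tau:V\to[0,\infty)$, $0<\varepsilon\le1/2$, and fix a total order $\preceq$ on $V$. Let $f:\mathbb{R}\to\mathbb{R}$ be $f(x)=0$ for $|x|\ge1$, $f(x)=(1+x)/\varepsilon$ on $[-1,-1+\varepsilon]$, $f(x)=1$ on $[-1+\varepsilon,1-\varepsilon]$, $f(x)=(1-x)/\varepsilon$ on $[1-\varepsilon,1]$. For $v\in V$, $h,t\in\mathbb{R}$ let $m_{v,h,t}(h')=\min(\tau(v)-t,\varepsilon/2)f(h'-h)+t$ if $\tau(v)\ge t$, and $m_{v,h,t}(h')=t$ if $\tau(v)<t$. On input $\varphi\in\mathbb{R}^V$ the algorithm outputs an ordering $P_1,\dots,P_{|V|}$ of $V$, numbers $s_k$ and functions $\tau_k:V\times\mathbb{R}\to\mathbb{R}$: set $\tau_1(v,h)=\tau(v)$; for $k=1,\dots,|V|$: let $P_k$ be the vertex $v\in V\setminus\{P_1,\dots,P_{k-1}\}$ minimizing $\tau_k(v,\varphi_v)$ (ties broken by taking the $\preceq$-smallest); set $s_k=\tau_k(P_k,\varphi_{P_k})$; if $k<|V|$ set $\tau_{k+1}(v,h)=\tau_k(v,h)$ if $v\in\{P_1,\dots,P_k\}$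 or $v\not\sim P_k$, and $\tau_{k+1}(v,h)=\min(\tau_k(v,h),m_{v,\varphi_{P_k},s_k}(h))$ otherwise. Define $T^+(\varphi)_{P_k}=\varphi_{P_k}+s_k$ ($1\le k\le|V|$) and $T^-(\varphi)=2\varphi-T^+(\varphi)$. *)

theory Defs
  imports Main "HOL.Real"
begin

definition addf :: "real \<Rightarrow> real \<Rightarrow> real" where
  "addf eps x = (if \<bar>x\<bar> \<ge> 1 then 0
      else if x \<le> -1 + eps then (1 + x) / eps
      else if x \<le> 1 - eps then 1
      else (1 - x) / eps)"

definition addm :: "('v \<Rightarrow> real) \<Rightarrow> real \<Rightarrow> 'v \<Rightarrow> real \<Rightarrow> real \<Rightarrow> real \<Rightarrow> real" where
  "addm tau eps v h t h' = (if tau v \<ge> t then min (tau v - t) (eps / 2) * addf eps (h' - h) + t else t)"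

text \<open>State of the algorithm after k steps: the list [P_1,...,P_k], the map P_j \<mapsto> s_j
  (value 0 at vertices not yet chosen), and the function tau_{k+1}.\<close>
type_synonym 'v add_state = "'v list \<times> ('v \<Rightarrow> real) \<times> ('v \<Rightarrow> real \<Rightarrow> real)"

definition add_choose :: "('v \<times> 'v) set \<Rightarrow> ('v \<Rightarrow> real) \<Rightarrow> 'v set \<Rightarrow> ('v \<Rightarrow> real \<Rightarrow> real) \<Rightarrow> 'v" where
  "add_choose ord phi R tk = (THE v. v \<in> R \<and> (\<forall>w\<in>R. tk v (phi v) \<le> tk w (phi w))
        \<and> (\<forall>w\<in>R. tk w (phi w) = tk v (phi v) \<longrightarrow> (v, w) \<in> ord))"

definition add_step :: "('v \<times> 'v) set \<Rightarrow> ('v \<times> 'v) set \<Rightarrow> ('v \<Rightarrow> real) \<Rightarrow> real \<Rightarrow> ('v \<Rightarrow> real)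
    \<Rightarrow> 'v add_state \<Rightarrow> 'v add_state" where
  "add_step E ord tau eps phi st = (case st of (Ps, S, tk) \<Rightarrow>
     (let P = add_choose ord phi (UNIV - set Ps) tk;
          s = tk P (phi P);
          Ps' = Ps @ [P]
      in (Ps', S(P := s),
          (\<lambda>v h. if v \<in> set Ps' \<or> (v, P) \<notin> E then tk v h
                 else min (tk v h) (addm tau eps v (phi P) s h)))))"

definition add_run :: "('v \<times> 'v) set \<Rightarrow> ('v \<times> 'v) set \<Rightarrow> ('v \<Rightarrow> real) \<Rightarrow> real \<Rightarrow> ('v \<Rightarrow> real)
    \<Rightarrow> nat \<Rightarrow> 'v add_state" where
  "add_run E ord tau eps phi k = (add_step E ord tau eps phi ^^ k) ([], (\<lambda>_. 0), (\<lambda>v h. tau v))"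

definition Tplus :: "('v::finite \<times> 'v) set \<Rightarrow> ('v \<times> 'v) set \<Rightarrow> ('v \<Rightarrow> real) \<Rightarrow> real
    \<Rightarrow> ('v \<Rightarrow> real) \<Rightarrow> ('v \<Rightarrow> real)" where
  "Tplus E ord tau eps phi = (\<lambda>v. phi v + fst (snd (add_run E ord tau eps phi (card (UNIV :: 'v set)))) v)"

definition Tminus :: "('v::finite \<times> 'v) set \<Rightarrow> ('v \<times> 'v) set \<Rightarrow> ('v \<Rightarrow> real) \<Rightarrow> real
    \<Rightarrow> ('v \<Rightarrow> real) \<Rightarrow> ('v \<Rightarrow> real)" where
  "Tminus E ord tau eps phi = (\<lambda>v. 2 * phi v - Tplus E ord tau eps phi v)"

end

theory Submission
  imports Defs Complex_Main
begin


definition Lip :: "(real \<Rightarrow> real) \<Rightarrow> bool" where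
  "Lip f \<longleftrightarrow> (\<forall>a b. \<bar>f a - f b\<bar> \<le> \<bar>a - b\<bar> / 2)"

lemma Lip_const: "Lip (\<lambda>_. c)" unfolding Lip_def by simp

lemma Lip_min: assumes "Lip f" "Lip g" shows "Lip (\<lambda>h. min (f h) (g h))"
  unfolding Lip_def
proof (intro allI)
  fix a b
  have 1: "\<bar>f a - f b\<bar> \<le> \<bar>a - b\<bar> / 2" and 2: "\<bar>g a - g b\<bar> \<le> \<bar>a - b\<bar> / 2"
    using assms unfolding Lip_def by auto
  show "\<bar>min (f a) (g a) - min (f b) (g b)\<bar> \<le> \<bar>a - b\<bar> / 2"
    using 1 2 unfolding min_def abs_le_iff by auto
qed

lemma addf_alt: assumes "0 < eps" "eps \<le> 1/2"
  shows "addf eps x = max 0 (min 1 ((1 - \<bar>x\<bar>) / eps))"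
  using assms unfolding addf_def by (auto simp: field_simps abs_if min_def max_def)

lemma addf_sym: assumes "0 < eps" "eps \<le> 1/2" shows "addf eps (- x) = addf eps x"
  using addf_alt[OF assms] by simp

lemma addf_nonneg: assumes "0 < eps" "eps \<le> 1/2" shows "0 \<le> addf eps x"
  using addf_alt[OF assms] by simp

lemma clamp_lip: "\<bar>max 0 (min 1 p) - max 0 (min (1::real) q)\<bar> \<le> \<bar>p - q\<bar>"
  by (auto simp: min_def max_def abs_if)

lemma addf_lip: assumes "0 < eps" "eps \<le> 1/2"
  shows "\<bar>addf eps a - addf eps b\<bar> \<le> \<bar>a - b\<bar> / eps"
proof -
  have "\<bar>addf eps a - addf eps b\<bar> \<le> \<bar>(1 - \<bar>a\<bar>) / eps - (1 - \<bar>b\<bar>) / eps\<bar>"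
    unfolding addf_alt[OF assms] by (rule clamp_lip)
  also have "\<dots> = \<bar>(\<bar>b\<bar> - \<bar>a\<bar>) / eps\<bar>" by (simp add: diff_divide_distrib[symmetric])
  also have "\<dots> = \<bar>\<bar>b\<bar> - \<bar>a\<bar>\<bar> / eps" using assms by (simp add: abs_divide)
  also have "\<dots> \<le> \<bar>a - b\<bar> / eps" using assms
    by (intro divide_right_mono) (auto simp: abs_le_iff)
  finally show ?thesis .
qed

lemma addm_ge: assumes "0 < eps" "eps \<le> 1/2" shows "t \<le> addm tau eps v h0 t h"
  using addf_nonneg[OF assms] assms unfolding addm_def by (auto intro!: mult_nonneg_nonneg)

lemma addm_sym: assumes "0 < eps" "eps \<le> 1/2"
  shows "addm tau eps v (- a) t h = addm tau eps v a t (- h)"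
proof -
  have e: "- h - a = - (h + a)" by simp
  have "addf eps (- h - a) = addf eps (h + a)" by (subst e) (rule addf_sym[OF assms])
  then show ?thesis unfolding addm_def by (simp add: add.commute)
qed

lemma addm_Lip: assumes "0 < eps" "eps \<le> 1/2" shows "Lip (addm tau eps v h0 t)"
  unfolding Lip_def
proof (intro allI)
  fix a b
  show "\<bar>addm tau eps v h0 t a - addm tau eps v h0 t b\<bar> \<le> \<bar>a - b\<bar> / 2"
  proof (cases "tau v \<ge> t")
    case True
    define c where "c = min (tau v - t) (eps / 2)"
    have c0: "0 \<le> c" using True assms unfolding c_def by auto
    have c1: "c \<le> eps/2" unfolding c_def by (rule min.cobounded2)
    have "\<bar>addm tau eps v h0 t a - addm tau eps v h0 t b\<bar> = c * \<bar>addf eps (a - h0) - addf eps (b - h0)\<bar>"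
      using True c0 unfolding addm_def c_def[symmetric] by (simp add: abs_mult right_diff_distrib[symmetric])
    also have "\<dots> \<le> c * (\<bar>a - b\<bar> / eps)"
      using addf_lip[OF assms, of "a - h0" "b - h0"] c0 by (intro mult_left_mono) auto
    also have "\<dots> \<le> (eps/2) * (\<bar>a - b\<bar> / eps)"
      using mult_right_mono[OF c1, of "\<bar>a - b\<bar> / eps"] assms by simp
    also have "\<dots> = \<bar>a - b\<bar> / 2" using assms by simp
    finally show ?thesis .
  next
    case False then show ?thesis unfolding addm_def by simp
  qed
qed

lemma Lip_cont: assumes "Lip f" shows "continuous_on S f"
proof -
  have "isCont f x" for x
    unfolding isCont_def LIM_eq
  proof (intro allI impI)
    fix r :: real assume r: "0 < r"
    show "\<exists>s>0. \<forall>y. y \<noteq> x \<and> norm (y - x) < s \<longrightarrow> norm (f y - f x) < r"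
    proof (intro exI[of _ r] conjI allI impI)
      fix y assume "y \<noteq> x \<and> norm (y - x) < r"
      then have "\<bar>y - x\<bar> < r" by simp
      moreover have "\<bar>f y - f x\<bar> \<le> \<bar>y - x\<bar> / 2" using assms unfolding Lip_def by blast
      ultimately show "norm (f y - f x) < r" using r by simp
    qed (use r in auto)
  qed
  then show ?thesis by (simp add: continuous_at_imp_continuous_on)
qed

lemma G_strict: assumes "Lip f" "a < b" shows "a + f a < b + f b"
proof -
  have "\<bar>f a - f b\<bar> \<le> \<bar>a - b\<bar> / 2" using assms(1) unfolding Lip_def by blast
  then show ?thesis using assms(2) by (simp add: abs_le_iff abs_if split: if_splits)
qed

lemma G_ex: assumes "Lip f" shows "\<exists>h. h + f h = y"
proof -
  define A where "A = \<bar>y - f 0\<bar>"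
  have A1: "y - f 0 \<le> A" and A2: "- A \<le> y - f 0" and A0: "0 \<le> A" unfolding A_def by auto
  define a where "a = - 2 * A"
  define b where "b = 2 * A"
  have la: "\<bar>f a - f 0\<bar> \<le> \<bar>a - 0\<bar> / 2" and lb: "\<bar>f b - f 0\<bar> \<le> \<bar>b - 0\<bar> / 2"
    using assms unfolding Lip_def by blast+
  have a0: "\<bar>a - 0\<bar> = 2 * A" and b0: "\<bar>b - 0\<bar> = 2 * A" unfolding a_def b_def using A0 by auto
  have "f a \<le> f 0 + A" using la a0 by (simp add: abs_le_iff)
  then have 1: "a + f a \<le> y" using A2 unfolding a_def by linarith
  have "f b \<ge> f 0 - A" using lb b0 by (simp add: abs_le_iff)
  then have 2: "y \<le> b + f b" using A1 unfolding b_def by linarith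
  have 3: "a \<le> b" unfolding a_def b_def using A0 by simp
  have "continuous_on {a..b} (\<lambda>h. h + f h)"
    using Lip_cont[OF assms] by (intro continuous_intros) auto
  then show ?thesis using IVT'[of "\<lambda>h. h + f h" a y b] 1 2 3 by auto
qed

definition Ginv :: "(real \<Rightarrow> real) \<Rightarrow> real \<Rightarrow> real" where
  "Ginv f y = (THE h. h + f h = y)"

lemma Ginv_unique: assumes "Lip f" "h + f h = y" shows "Ginv f y = h"
  unfolding Ginv_def
proof (rule the_equality)
  fix h' assume "h' + f h' = y"
  then show "h' = h" using G_strict[OF assms(1)] assms(2) by (metis linorder_neqE order_less_irrefl)
qed (fact assms(2))

lemma Ginv_eq: assumes "Lip f" shows "Ginv f y + f (Ginv f y) = y"
  using G_ex[OF assms, of y] Ginv_unique[OF assms] by metis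

lemma Ginv_le: assumes "Lip f" "y \<le> h + f h" shows "Ginv f y \<le> h"
proof (rule ccontr)
  assume "\<not> Ginv f y \<le> h"
  then have "h + f h < Ginv f y + f (Ginv f y)" using G_strict[OF assms(1)] by simp
  then show False using Ginv_eq[OF assms(1)] assms(2) by simp
qed



lemma add_step_eq:
  assumes "add_choose ord phi (UNIV - set Ps) tk = P"
  shows "add_step E ord tau eps phi (Ps,S,tk) = (Ps@[P], S(P := tk P (phi P)),
    \<lambda>v h. if v \<in> set (Ps@[P]) \<or> (v,P) \<notin> E then tk v h else min (tk v h) (addm tau eps v (phi P) (tk P (phi P)) h))"
  unfolding add_step_def Let_def prod.case assms ..

lemma add_choose_cong:
  assumes "\<And>v. tk v (phi v) = tk' v (phi' v)"
  shows "add_choose ord phi R tk = add_choose ord phi' R tk'"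
  unfolding add_choose_def assms ..

locale AA =
  fixes E :: "('v::finite \<times> 'v) set" and ord :: "('v \<times> 'v) set"
    and tau :: "'v \<Rightarrow> real" and eps :: real
  assumes lin: "linear_order ord" and ep0: "0 < eps" and ep1: "eps \<le> 1/2"
begin

lemma ord_refl: "(x,x) \<in> ord"
  using lin unfolding linear_order_on_def partial_order_on_def preorder_on_def refl_on_def by blast
lemma ord_antisym: "(x,y) \<in> ord \<Longrightarrow> (y,x) \<in> ord \<Longrightarrow> x = y"
  using lin unfolding linear_order_on_def partial_order_on_def antisym_def by blast
lemma ord_trans: "(x,y) \<in> ord \<Longrightarrow> (y,z) \<in> ord \<Longrightarrow> (x,z) \<in> ord"
  using lin unfolding linear_order_on_def partial_order_on_def preorder_on_def trans_def by blast
lemma ord_total: "x \<noteq> y \<Longrightarrow> (x,y) \<in> ord \<or> (y,x) \<in> ord"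
  using lin unfolding linear_order_on_def total_on_def by blast

lemma ord_min: "finite A \<Longrightarrow> A \<noteq> {} \<Longrightarrow> \<exists>a\<in>A. \<forall>b\<in>A. (a,b) \<in> ord"
proof (induction A rule: finite_ne_induct)
  case (singleton x) then show ?case using ord_refl by auto
next
  case (insert x F)
  then obtain a where a: "a \<in> F" "\<forall>b\<in>F. (a,b) \<in> ord" by blast
  show ?case
  proof (cases "(x,a) \<in> ord")
    case True then show ?thesis using a ord_trans ord_refl by blast
  next
    case False
    then have "(a,x) \<in> ord" using ord_total[of x a] ord_refl by blast
    then show ?thesis using a by blast
  qed
qed

definition chpred :: "('v \<Rightarrow> real) \<Rightarrow> 'v set \<Rightarrow> 'v \<Rightarrow> bool" where
  "chpred val R v \<longleftrightarrow> v \<in> R \<and> (\<forall>w\<in>R. val v \<le> val w) \<and> (\<forall>w\<in>R. val w = val v \<longrightarrow> (v,w) \<in> ord)"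

lemma chpred_unique: "chpred val R v \<Longrightarrow> chpred val R w \<Longrightarrow> v = w"
  unfolding chpred_def using ord_antisym by (metis order_antisym)

lemma chpred_ex: assumes "R \<noteq> {}" shows "\<exists>v. chpred val R v"
proof -
  define m where "m = Min (val ` R)"
  define M where "M = {w\<in>R. val w = m}"
  have fin: "finite R" by simp
  have "m \<in> val ` R" unfolding m_def using assms fin by (intro Min_in) auto
  then have "M \<noteq> {}" unfolding M_def by auto
  then obtain a where a: "a \<in> M" "\<forall>b\<in>M. (a,b) \<in> ord" using ord_min[of M] by auto
  have "\<forall>w\<in>R. m \<le> val w" unfolding m_def using fin by auto
  then show ?thesis using a unfolding chpred_def M_def by (intro exI[of _ a]) auto
qed

lemma choose_eq: assumes "chpred (\<lambda>v. tk v (phi v)) R P" shows "add_choose ord phi R tk = P"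
  unfolding add_choose_def
  apply (rule the_equality)
  using assms chpred_unique[OF assms] unfolding chpred_def by blast+

lemma choose_spec: assumes "R \<noteq> {}" shows "chpred (\<lambda>v. tk v (phi v)) R (add_choose ord phi R tk)"
proof -
  obtain P where "chpred (\<lambda>v. tk v (phi v)) R P" using chpred_ex[OF assms] by blast
  then show ?thesis using choose_eq by simp
qed

primrec grun :: "(nat \<Rightarrow> 'v \<Rightarrow> real) \<Rightarrow> nat \<Rightarrow> 'v add_state" where
  "grun X 0 = ([], (\<lambda>_. 0), (\<lambda>v h. tau v))"
| "grun X (Suc k) = add_step E ord tau eps (X k) (grun X k)"

definition "Ps X k = fst (grun X k)"
definition "Ss X k = fst (snd (grun X k))"
definition "tks X k = snd (snd (grun X k))"
definition "Pk X k = add_choose ord (X k) (UNIV - set (Ps X k)) (tks X k)"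
definition "sv X k = tks X k (Pk X k) (X k (Pk X k))"

lemma grun_eq: "grun X k = (Ps X k, Ss X k, tks X k)"
  unfolding Ps_def Ss_def tks_def by simp

lemma grun_Suc: "grun X (Suc k) = (Ps X k @ [Pk X k], (Ss X k)(Pk X k := sv X k),
    \<lambda>v h. if v \<in> set (Ps X k @ [Pk X k]) \<or> (v, Pk X k) \<notin> E then tks X k v h
          else min (tks X k v h) (addm tau eps v (X k (Pk X k)) (sv X k) h))"
  unfolding grun.simps(2) grun_eq[of X k] add_step_eq[OF Pk_def[symmetric]] sv_def ..

lemma Ps_Suc: "Ps X (Suc k) = Ps X k @ [Pk X k]"
  unfolding Ps_def[of X "Suc k"] grun_Suc by simp
lemma Ss_Suc: "Ss X (Suc k) = (Ss X k)(Pk X k := sv X k)"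
  unfolding Ss_def[of X "Suc k"] grun_Suc by simp
lemma tks_Suc: "tks X (Suc k) v h = (if v \<in> set (Ps X (Suc k)) \<or> (v, Pk X k) \<notin> E then tks X k v h
          else min (tks X k v h) (addm tau eps v (X k (Pk X k)) (sv X k) h))"
  unfolding tks_def[of X "Suc k"] grun_Suc Ps_Suc by simp

lemma Ps_0: "Ps X 0 = []" unfolding Ps_def by simp
lemma tks_0: "tks X 0 v h = tau v" unfolding tks_def by simp

lemma Ps_map: "Ps X k = map (Pk X) [0..<k]"
  by (induction k) (simp_all add: Ps_0 Ps_Suc)

lemma len_Ps: "length (Ps X k) = k" unfolding Ps_map by simp

lemma R_ne: assumes "distinct (Ps X k)" "k < card (UNIV::'v set)" shows "UNIV - set (Ps X k) \<noteq> {}"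
proof
  assume "UNIV - set (Ps X k) = {}"
  then have "set (Ps X k) = UNIV" by auto
  then have "card (set (Ps X k)) = card (UNIV::'v set)" by simp
  moreover have "card (set (Ps X k)) = k" using assms(1) distinct_card len_Ps by metis
  ultimately show False using assms(2) by simp
qed

lemma dist_Ps: "k \<le> card (UNIV::'v set) \<Longrightarrow> distinct (Ps X k)"
proof (induction k)
  case 0 then show ?case by (simp add: Ps_0)
next
  case (Suc k)
  then have d: "distinct (Ps X k)" and k: "k < card (UNIV::'v set)" by auto
  have "chpred (\<lambda>v. tks X k v (X k v)) (UNIV - set (Ps X k)) (Pk X k)"
    unfolding Pk_def by (rule choose_spec[OF R_ne[OF d k]])
  then have "Pk X k \<notin> set (Ps X k)" unfolding chpred_def by blast
  then show ?case using d by (simp add: Ps_Suc)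
qed

lemma chpred_Pk: assumes "k < card (UNIV::'v set)"
  shows "chpred (\<lambda>v. tks X k v (X k v)) (UNIV - set (Ps X k)) (Pk X k)"
  unfolding Pk_def using assms by (intro choose_spec R_ne dist_Ps) auto

lemma Pk_inj: assumes "j < card (UNIV::'v set)" "k < card (UNIV::'v set)" "Pk X j = Pk X k" shows "j = k"
proof -
  have "distinct (map (Pk X) [0..<card (UNIV::'v set)])" using dist_Ps[of "card (UNIV::'v set)" X] by (simp add: Ps_map)
  then show ?thesis using assms by (simp add: distinct_map inj_on_def)
qed

lemma Pk_surj: "\<exists>j<card (UNIV::'v set). Pk X j = v"
proof -
  have d: "distinct (Ps X (card (UNIV::'v set)))" by (rule dist_Ps) simp
  then have "card (set (Ps X (card (UNIV::'v set)))) = card (UNIV::'v set)" using distinct_card len_Ps by metis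
  then have "set (Ps X (card (UNIV::'v set))) = UNIV" by (simp add: card_subset_eq)
  then show ?thesis unfolding Ps_map by (metis UNIV_I atLeastLessThan_iff imageE set_map set_upt)
qed

lemma in_R: assumes "v \<in> UNIV - set (Ps X k)" obtains j where "k \<le> j" "j < card (UNIV::'v set)" "Pk X j = v"
proof -
  obtain j where j: "j < card (UNIV::'v set)" "Pk X j = v" using Pk_surj by blast
  have "\<not> j < k" using assms j unfolding Ps_map by auto
  then show ?thesis by (meson j not_less that)
qed

lemma tks_frozen: "j < k \<Longrightarrow> tks X k (Pk X j) = tks X j (Pk X j)"
proof (induction k)
  case 0 then show ?case by simp
next
  case (Suc k)
  have "Pk X j \<in> set (Ps X (Suc k))" using Suc.prems unfolding Ps_map by (force simp: less_Suc_eq)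
  then have "tks X (Suc k) (Pk X j) = tks X k (Pk X j)" by (simp add: tks_Suc fun_eq_iff)
  then show ?case using Suc by (cases "j = k") auto
qed

lemma tks_mono1: "tks X (Suc k) v h \<le> tks X k v h"
  by (simp add: tks_Suc)

lemma tks_mono: "j \<le> k \<Longrightarrow> tks X k v h \<le> tks X j v h"
proof (induction k rule: dec_induct)
  case base then show ?case by simp
next
  case (step k) then show ?case using tks_mono1[of X k v h] by linarith
qed

lemma tks_alt: "tks X (Suc k) v h = tks X k v h \<or> sv X k \<le> tks X (Suc k) v h"
  using addm_ge[OF ep0 ep1, of "sv X k" tau v] by (auto simp: tks_Suc min_def)

lemma tks_Lip: "Lip (tks X k v)"
proof (induction k arbitrary: v)
  case 0 then show ?case by (simp add: tks_0 Lip_const)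
next
  case (Suc k)
  have "tks X (Suc k) v = (if v \<in> set (Ps X (Suc k)) \<or> (v, Pk X k) \<notin> E then tks X k v
          else (\<lambda>h. min (tks X k v h) (addm tau eps v (X k (Pk X k)) (sv X k) h)))"
    by (simp add: tks_Suc fun_eq_iff)
  moreover have "Lip (\<lambda>h. min (tks X k v h) (addm tau eps v (X k (Pk X k)) (sv X k) h))"
    by (rule Lip_min[OF Suc.IH addm_Lip[OF ep0 ep1]])
  ultimately show ?case using Suc.IH by simp
qed

lemma Ss_val: "j < k \<Longrightarrow> k \<le> card (UNIV::'v set) \<Longrightarrow> Ss X k (Pk X j) = sv X j"
proof (induction k)
  case 0 then show ?case by simp
next
  case (Suc k)
  show ?case
  proof (cases "j = k")
    case True then show ?thesis by (simp add: Ss_Suc)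
  next
    case False
    then have "Pk X k \<noteq> Pk X j" using Pk_inj Suc.prems by (metis less_Suc_eq order_less_le_trans)
    then show ?thesis using Suc False by (simp add: Ss_Suc)
  qed
qed

end


context AA begin

definition dec :: "('v \<Rightarrow> real) \<Rightarrow> ('v \<Rightarrow> real \<Rightarrow> real) \<Rightarrow> 'v \<Rightarrow> real" where
  "dec psi tk = (\<lambda>v. Ginv (tk v) (psi v))"

primrec irun :: "('v \<Rightarrow> real) \<Rightarrow> nat \<Rightarrow> 'v add_state" where
  "irun psi 0 = ([], (\<lambda>_. 0), (\<lambda>v h. tau v))"
| "irun psi (Suc k) = add_step E ord tau eps (dec psi (snd (snd (irun psi k)))) (irun psi k)"

definition "IX psi k = dec psi (snd (snd (irun psi k)))"

lemma irun_grun: "irun psi k = grun (IX psi) k"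
proof (induction k)
  case 0 then show ?case by simp
next
  case (Suc k)
  have "irun psi (Suc k) = add_step E ord tau eps (IX psi k) (irun psi k)"
    unfolding irun.simps IX_def ..
  then show ?case unfolding Suc.IH grun.simps .
qed

lemma IX_eq: "IX psi k = dec psi (tks (IX psi) k)"
proof -
  have "IX psi k = dec psi (snd (snd (irun psi k)))" by (rule IX_def)
  also have "snd (snd (irun psi k)) = tks (IX psi) k" unfolding tks_def by (subst irun_grun) (rule refl)
  finally show ?thesis .
qed

lemma add_run_grun: "add_run E ord tau eps phi k = grun (\<lambda>_. phi) k"
proof (induction k)
  case 0 then show ?case by (simp add: add_run_def)
next
  case (Suc k)
  have "add_run E ord tau eps phi (Suc k) = add_step E ord tau eps phi (add_run E ord tau eps phi k)"
    unfolding add_run_def funpow.simps comp_def ..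
  then show ?case unfolding Suc.IH grun.simps .
qed

lemma Tplus_eq: "Tplus E ord tau eps phi = (\<lambda>v. phi v + Ss (\<lambda>_. phi) (card (UNIV::'v set)) v)"
  unfolding Tplus_def add_run_grun Ss_def ..

lemma grun_step_cong:
  assumes "grun X k = grun Y k"
    and "add_choose ord (Y k) (UNIV - set (Ps X k)) (tks X k) = Pk X k"
    and "Y k (Pk X k) = X k (Pk X k)"
  shows "grun X (Suc k) = grun Y (Suc k)"
proof -
  have "grun Y (Suc k) = add_step E ord tau eps (Y k) (Ps X k, Ss X k, tks X k)"
    using assms(1) by (simp add: grun_eq[of X k])
  also have "\<dots> = grun X (Suc k)"
    unfolding add_step_eq[OF assms(2)] grun_Suc assms(3) sv_def ..
  finally show ?thesis by simp
qed

lemma dec_eq: "Lip (tk v) \<Longrightarrow> dec psi tk v + tk v (dec psi tk v) = psi v"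
  unfolding dec_def by (rule Ginv_eq)
lemma dec_unique: "Lip (tk v) \<Longrightarrow> h + tk v h = psi v \<Longrightarrow> dec psi tk v = h"
  unfolding dec_def by (rule Ginv_unique)
lemma dec_le: "Lip (tk v) \<Longrightarrow> psi v \<le> h + tk v h \<Longrightarrow> dec psi tk v \<le> h"
  unfolding dec_def by (rule Ginv_le)

section \<open>Forward direction\<close>

lemma fwd_psi:
  assumes "j < card (UNIV::'v set)"
  shows "Tplus E ord tau eps phi (Pk (\<lambda>_. phi) j) = phi (Pk (\<lambda>_. phi) j) + sv (\<lambda>_. phi) j"
  unfolding Tplus_eq using Ss_val[OF assms] by simp

lemma fwd_sv_mono1:
  assumes "Suc k < card (UNIV::'v set)"
  shows "sv (\<lambda>_. phi) k \<le> sv (\<lambda>_. phi) (Suc k)"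
proof -
  define F where "F = (\<lambda>_::nat. phi)"
  define P' where "P' = Pk F (Suc k)"
  have "P' \<in> UNIV - set (Ps F (Suc k))" using chpred_Pk[OF assms, of F] unfolding chpred_def P'_def by blast
  then have "P' \<in> UNIV - set (Ps F k)" by (auto simp: Ps_Suc)
  then have 1: "sv F k \<le> tks F k P' (phi P')"
    using chpred_Pk[of k F] assms unfolding chpred_def sv_def F_def by auto
  have "sv F (Suc k) = tks F (Suc k) P' (phi P')" unfolding sv_def P'_def F_def ..
  then show ?thesis using 1 tks_alt[of F k P' "phi P'"] unfolding F_def by auto
qed

lemma fwd_sv_mono:
  assumes "k \<le> j" "j < card (UNIV::'v set)"
  shows "sv (\<lambda>_. phi) k \<le> sv (\<lambda>_. phi) j"
  using assms
proof (induction j rule: dec_induct)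
  case base then show ?case by simp
next
  case (step j) then show ?case using fwd_sv_mono1[of j phi] by simp
qed

lemma fwd_step:
  assumes k: "k < card (UNIV::'v set)"
    and psi: "psi = Tplus E ord tau eps phi"
    and S: "grun (\<lambda>_. phi) k = grun (IX psi) k"
  shows "grun (\<lambda>_. phi) (Suc k) = grun (IX psi) (Suc k)"
proof -
  define F where "F = (\<lambda>_::nat. phi)"
  define T where "T = tks F k"
  define R where "R = UNIV - set (Ps F k)"
  define P where "P = Pk F k"
  have TI: "tks (IX psi) k = T" using S unfolding T_def F_def tks_def by simp
  have IXk: "IX psi k = dec psi T" using IX_eq[of psi k] TI by simp
  have LT: "Lip (T v)" for v unfolding T_def by (rule tks_Lip)
  have chF: "chpred (\<lambda>v. T v (phi v)) R P"
    using chpred_Pk[OF k, of F] unfolding T_def R_def P_def F_def by simp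
  have svk: "sv F k = T P (phi P)" unfolding sv_def T_def P_def F_def ..
  have cP: "dec psi T P = phi P"
    using dec_unique[OF LT] fwd_psi[OF k, of phi] svk psi unfolding P_def F_def by simp
  have "chpred (\<lambda>v. T v (dec psi T v)) R P"
    unfolding chpred_def
  proof (intro conjI ballI impI)
    show "P \<in> R" using chF unfolding chpred_def by blast
  next
    fix w assume w: "w \<in> R"
    then obtain j where j: "k \<le> j" "j < card (UNIV::'v set)" "Pk F j = w"
      unfolding R_def by (rule in_R)
    define c where "c = dec psi T w"
    have pw: "psi w = phi w + sv F j" using fwd_psi[OF j(2), of phi] j(3) psi unfolding F_def by simp
    have svj: "sv F j = tks F j w (phi w)" unfolding sv_def j(3)[symmetric] F_def ..
    have "tks F j w (phi w) \<le> T w (phi w)" unfolding T_def by (rule tks_mono[OF j(1)])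
    then have "c \<le> phi w" unfolding c_def using dec_le[OF LT] pw svj by simp
    have ce: "c + T w c = psi w" unfolding c_def by (rule dec_eq[OF LT])
    have mono: "sv F k \<le> sv F j" using fwd_sv_mono[OF j(1,2)] unfolding F_def .
    show "T P (dec psi T P) \<le> T w (dec psi T w)"
      using cP svk ce pw mono \<open>c \<le> phi w\<close> unfolding c_def[symmetric] by simp
    assume tie: "T w (dec psi T w) = T P (dec psi T P)"
    then have "T w c = sv F k" using cP svk unfolding c_def by simp
    then have "c = phi w" using ce pw mono \<open>c \<le> phi w\<close> by simp
    then have "T w (phi w) = T P (phi P)" using \<open>T w c = sv F k\<close> svk by simp
    then show "(P, w) \<in> ord" using chF w unfolding chpred_def by blast
  qed
  then have "add_choose ord (dec psi T) R T = P" by (rule choose_eq)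
  then have "add_choose ord (IX psi k) (UNIV - set (Ps F k)) (tks F k) = Pk F k"
    unfolding IXk R_def T_def P_def .
  moreover have "IX psi k (Pk F k) = F k (Pk F k)" using IXk cP unfolding P_def F_def by simp
  ultimately show ?thesis using grun_step_cong[of F k "IX psi"] S unfolding F_def by simp
qed

lemma fwd_all:
  assumes "psi = Tplus E ord tau eps phi"
  shows "k \<le> card (UNIV::'v set) \<Longrightarrow> grun (\<lambda>_. phi) k = grun (IX psi) k"
proof (induction k)
  case 0 then show ?case by simp
next
  case (Suc k) then show ?case using fwd_step[OF _ assms] by simp
qed

lemma fwd_dec:
  assumes psi: "psi = Tplus E ord tau eps phi"
  shows "phi = dec psi (tks (IX psi) (card (UNIV::'v set)))"
proof
  fix v
  define F where "F = (\<lambda>_::nat. phi)"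
  define n where "n = card (UNIV::'v set)"
  obtain j where j: "j < n" "Pk F j = v" using Pk_surj unfolding n_def by blast
  have "tks (IX psi) n = tks F n" using fwd_all[OF psi, of n] unfolding tks_def F_def n_def by simp
  then have "tks (IX psi) n v = tks F j v" using tks_frozen[OF j(1), of F] j(2) by simp
  moreover have "phi v + tks F j v (phi v) = psi v"
    using fwd_psi[of j phi] j psi unfolding sv_def F_def n_def by simp
  ultimately show "phi v = dec psi (tks (IX psi) n) v"
    using dec_unique[of "tks (IX psi) n" v "phi v" psi, OF tks_Lip] by simp
qed

lemma Tplus_inj: "inj (Tplus E ord tau eps)"
proof (rule injI)
  fix phi phi' assume "Tplus E ord tau eps phi = Tplus E ord tau eps phi'"
  then show "phi = phi'" using fwd_dec[OF refl, of phi] fwd_dec[OF refl, of phi'] by metis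
qed

section \<open>Inverse direction\<close>

lemma inv_sv_mono1:
  assumes "Suc k < card (UNIV::'v set)"
  shows "sv (IX psi) k \<le> sv (IX psi) (Suc k)"
proof -
  define I where "I = IX psi"
  define P' where "P' = Pk I (Suc k)"
  define c' where "c' = I (Suc k) P'"
  have "P' \<in> UNIV - set (Ps I (Suc k))" using chpred_Pk[OF assms, of I] unfolding chpred_def P'_def by blast
  then have P'R: "P' \<in> UNIV - set (Ps I k)" by (auto simp: Ps_Suc)
  have 1: "sv I k \<le> tks I k P' (I k P')"
    using chpred_Pk[of k I] assms P'R unfolding chpred_def sv_def by auto
  have sv1: "sv I (Suc k) = tks I (Suc k) P' c'" unfolding sv_def P'_def c'_def ..
  have c'e: "c' + tks I (Suc k) P' c' = psi P'"
    unfolding c'_def I_def IX_eq[of psi "Suc k"] by (rule dec_eq[OF tks_Lip])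
  show ?thesis
  proof (cases "tks I (Suc k) P' c' = tks I k P' c'")
    case True
    then have "I k P' = c'" unfolding I_def IX_eq[of psi k]
      using c'e dec_unique[OF tks_Lip] unfolding I_def by simp
    then show ?thesis using 1 True sv1 unfolding I_def by simp
  next
    case False then show ?thesis using tks_alt[of I k P' c'] sv1 unfolding I_def by auto
  qed
qed

lemma inv_sv_mono:
  assumes "k \<le> j" "j < card (UNIV::'v set)"
  shows "sv (IX psi) k \<le> sv (IX psi) j"
  using assms
proof (induction j rule: dec_induct)
  case base then show ?case by simp
next
  case (step j) then show ?case using inv_sv_mono1[of j psi] by simp
qed

definition "invphi psi = dec psi (tks (IX psi) (card (UNIV::'v set)))"

lemma inv_phi:
  assumes "j < card (UNIV::'v set)"
  shows "invphi psi (Pk (IX psi) j) = IX psi j (Pk (IX psi) j)"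
  unfolding invphi_def dec_def tks_frozen[OF assms] IX_eq[of psi j] ..

lemma inv_step:
  assumes k: "k < card (UNIV::'v set)"
    and S: "grun (IX psi) k = grun (\<lambda>_. invphi psi) k"
  shows "grun (IX psi) (Suc k) = grun (\<lambda>_. invphi psi) (Suc k)"
proof -
  define I where "I = IX psi"
  define phi where "phi = invphi psi"
  define T where "T = tks I k"
  define R where "R = UNIV - set (Ps I k)"
  define P where "P = Pk I k"
  have IXk: "I k = dec psi T" unfolding I_def T_def by (rule IX_eq)
  have LT: "Lip (T v)" for v unfolding T_def by (rule tks_Lip)
  have chI: "chpred (\<lambda>v. T v (I k v)) R P"
    using chpred_Pk[OF k, of I] unfolding T_def R_def P_def by simp
  have phiP: "phi P = I k P" unfolding phi_def P_def I_def by (rule inv_phi[OF k])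
  have svk: "sv I k = T P (phi P)" unfolding sv_def T_def P_def phiP[unfolded P_def] ..
  have "chpred (\<lambda>v. T v (phi v)) R P"
    unfolding chpred_def
  proof (intro conjI ballI impI)
    show "P \<in> R" using chI unfolding chpred_def by blast
  next
    fix w assume w: "w \<in> R"
    then obtain j where j: "k \<le> j" "j < card (UNIV::'v set)" "Pk I j = w"
      unfolding R_def by (rule in_R)
    have phiw: "phi w = I j w" using inv_phi[OF j(2), of psi] j(3) unfolding phi_def I_def by simp
    have svj: "sv I j = tks I j w (phi w)" unfolding sv_def j(3) phiw ..
    have le: "tks I j w (phi w) \<le> T w (phi w)" unfolding T_def by (rule tks_mono[OF j(1)])
    have mono: "sv I k \<le> sv I j" using inv_sv_mono[OF j(1,2)] unfolding I_def .
    show "T P (phi P) \<le> T w (phi w)" using svk svj le mono by simp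
    assume tie: "T w (phi w) = T P (phi P)"
    then have eqT: "T w (phi w) = tks I j w (phi w)" using svk svj le mono by simp
    have "I j w + tks I j w (I j w) = psi w"
      unfolding I_def IX_eq[of psi j] by (rule dec_eq[OF tks_Lip])
    then have "phi w + T w (phi w) = psi w" using eqT phiw by simp
    then have "I k w = phi w" unfolding IXk by (rule dec_unique[OF LT])
    then have "T w (I k w) = T P (I k P)" using tie phiP by simp
    then show "(P, w) \<in> ord" using chI w unfolding chpred_def by blast
  qed
  then have "add_choose ord phi R T = P" by (rule choose_eq)
  then have "add_choose ord ((\<lambda>_. invphi psi) k) (UNIV - set (Ps I k)) (tks I k) = Pk I k"
    unfolding R_def T_def P_def phi_def by simp
  moreover have "(\<lambda>_. invphi psi) k (Pk I k) = I k (Pk I k)" using phiP unfolding phi_def P_def by simp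
  ultimately show ?thesis using grun_step_cong[of I k "\<lambda>_. invphi psi"] S unfolding I_def by simp
qed

lemma inv_all: "k \<le> card (UNIV::'v set) \<Longrightarrow> grun (IX psi) k = grun (\<lambda>_. invphi psi) k"
proof (induction k)
  case 0 then show ?case by simp
next
  case (Suc k) then show ?case using inv_step by simp
qed

lemma inv_T: "Tplus E ord tau eps (invphi psi) = psi"
proof
  fix v
  define I where "I = IX psi"
  define n where "n = card (UNIV::'v set)"
  obtain j where j: "j < n" "Pk I j = v" using Pk_surj unfolding n_def by blast
  have "Ss (\<lambda>_. invphi psi) n = Ss I n" using inv_all[of n psi] unfolding Ss_def I_def n_def by simp
  then have "Ss (\<lambda>_. invphi psi) n v = sv I j" using Ss_val[OF j(1), of I] unfolding j(2) n_def by simp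
  moreover have "invphi psi v = I j v" using inv_phi[of j psi] j unfolding I_def n_def by simp
  moreover have "I j v + tks I j v (I j v) = psi v"
    unfolding I_def IX_eq[of psi j] by (rule dec_eq[OF tks_Lip])
  ultimately show "Tplus E ord tau eps (invphi psi) v = psi v"
    unfolding Tplus_eq n_def[symmetric] sv_def j(2) by simp
qed

lemma Tplus_surj: "surj (Tplus E ord tau eps)"
  using inv_T by (metis surjI)

section \<open>Symmetry\<close>

lemma neg_run: "grun (\<lambda>_. - phi) k = (Ps (\<lambda>_. phi) k, Ss (\<lambda>_. phi) k, \<lambda>v h. tks (\<lambda>_. phi) k v (- h))"
proof (induction k)
  case 0 then show ?case by (simp add: Ps_0 Ss_def tks_0)
next
  case (Suc k)
  define F where "F = (\<lambda>_::nat. phi)"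
  have ch: "add_choose ord (- phi) (UNIV - set (Ps F k)) (\<lambda>v h. tks F k v (- h)) = Pk F k"
    unfolding Pk_def by (rule add_choose_cong) (simp add: F_def)
  have "grun (\<lambda>_. - phi) (Suc k) = add_step E ord tau eps (- phi) (Ps F k, Ss F k, \<lambda>v h. tks F k v (- h))"
    by (simp only: grun.simps Suc.IH F_def)
  also have "\<dots> = (Ps F (Suc k), Ss F (Suc k), \<lambda>v h. tks F (Suc k) v (- h))"
    unfolding add_step_eq[OF ch] Ps_Suc Ss_Suc
    by (simp add: tks_Suc Ps_Suc sv_def F_def addm_sym[OF ep0 ep1] fun_eq_iff)
  finally show ?case unfolding F_def .
qed

lemma Tminus_eq: "Tminus E ord tau eps phi = - Tplus E ord tau eps (- phi)"
proof -
  have "Ss (\<lambda>_. - phi) (card (UNIV::'v set)) = Ss (\<lambda>_. phi) (card (UNIV::'v set))"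
    unfolding Ss_def[of "\<lambda>_. - phi"] neg_run by simp
  then show ?thesis unfolding Tminus_def Tplus_eq by (simp add: fun_eq_iff)
qed

end

theorem mainTheorem7:
  fixes E :: "('v::finite \<times> 'v) set" and ord :: "('v \<times> 'v) set"
    and tau :: "'v \<Rightarrow> real" and eps :: real
  assumes sym_E: "sym E"
    and connected: "\<forall>v w. (v, w) \<in> E\<^sup>*"
    and ord: "linear_order ord"
    and tau_nonneg: "\<forall>v. tau v \<ge> 0"
    and eps_pos: "0 < eps" and eps_le: "eps \<le> 1/2"
  shows "bij (Tplus E ord tau eps) \<and> bij (Tminus E ord tau eps)
    \<and> (\<forall>phi. Tminus E ord tau eps phi = - Tplus E ord tau eps (- phi))"
proof -
  interpret AA E ord tau eps using ord eps_pos eps_le by unfold_locales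
  have b: "bij (Tplus E ord tau eps)" using Tplus_inj Tplus_surj by (simp add: bij_def)
  have eq: "Tminus E ord tau eps = uminus \<circ> Tplus E ord tau eps \<circ> uminus"
    by (rule ext) (simp add: Tminus_eq)
  have uu: "(uminus :: ('v \<Rightarrow> real) \<Rightarrow> ('v \<Rightarrow> real)) \<circ> uminus = id" by (rule ext) (simp add: fun_eq_iff)
  have u: "bij (uminus :: ('v \<Rightarrow> real) \<Rightarrow> ('v \<Rightarrow> real))" by (rule o_bij[OF uu uu])
  have "bij (Tminus E ord tau eps)" unfolding eq by (intro bij_comp u b)
  then show ?thesis using b Tminus_eq by blast
qed

end
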